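(* Assume (A1). For any $\delta>0$, the function $C_\delta(t)=\int_0^t\frac{dG(v)}{\bar G(v)\bar H^{\delta}(v)}$ is regularly varying at infinity with index $\delta/\gamma$, and $C_\delta(t)\sim\frac{\gamma/\gamma_C}{\delta\,\bar H^{\delta}(t)}$ as $t\to+\infty$.
   Context: Let $K\ge 1$. Let $X\ge0$ have continuous distribution function $F$ and cause $\mathcal C\in\{1,\dots,K\}$; let $C\ge0$ be independent with continuous distribution function $G$. Let $\bar F^{(j)}(t)=P(X>t,\mathcal C=j)$, $\bar F=1-F=\sum_j\bar F^{(j)}$, $\bar G=1-G$, $\bar H=\bar F\bar G$. Regular variation with index $\alpha$: $f(tx)/f(t)\to x^\alpha$ as $t\to\infty$ for all $x>0$. (A1): for every $j$, $\bar F^{(j)}$ is regularly varying with index $-1/\gamma_j$ ($\gamma_j>0$), and $\bar G$ regularly varying with index $-1/\gamma_C$ ($\gamma_C>0$); $\gamma_F=\max_j\gamma_j$ and $1/\gamma=1/\gamma_F+1/\gamma_C$. *)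

theory Defs
  imports "HOL-Probability.Probability" "HOL-Library.Landau_Symbols"
begin

definition regularly_varying :: "(real \<Rightarrow> real) \<Rightarrow> real \<Rightarrow> bool" where
  "regularly_varying f \<alpha> \<longleftrightarrow>
     (\<forall>x>0. ((\<lambda>t. f (t * x) / f t) \<longlongrightarrow> x powr \<alpha>) at_top)"

end

theory Submission
  imports Defs "HOL-Real_Asymp.Real_Asymp"
begin


lemma geom_decay:
  fixes e :: "real \<Rightarrow> real"
  assumes mu: "0 < \<mu>" "\<mu> < 1" and T: "T > 0" and r: "0 \<le> r" "r < 1" and B: "B \<ge> 0"
    and rec: "\<And>t. t \<ge> T \<Longrightarrow> e t \<le> r * e (t * \<mu>)"
    and base: "\<And>s. T * \<mu> \<le> s \<Longrightarrow> s \<le> T \<Longrightarrow> e s \<le> B"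
    and eps: "\<epsilon> > 0"
  shows "eventually (\<lambda>t. e t \<le> \<epsilon>) at_top"
proof -
  have claim: "\<And>t. T * \<mu> \<le> t * \<mu> ^ n \<Longrightarrow> t * \<mu> ^ n \<le> T \<Longrightarrow> e t \<le> B * r ^ n" for n
  proof (induction n)
    case 0
    then show ?case using base by simp
  next
    case (Suc n)
    fix t assume h1: "T * \<mu> \<le> t * \<mu> ^ Suc n" and h2: "t * \<mu> ^ Suc n \<le> T"
    have "T \<le> t * \<mu> ^ n" using h1 mu by (simp add: mult.commute mult.left_commute)
    moreover have "t * \<mu> ^ n \<le> t"
    proof -
      have "t > 0" using `T \<le> t * \<mu> ^ n` T mu
        by (smt (verit, best) mult_nonpos_nonneg zero_le_power)
      then show ?thesis using mu by (simp add: power_le_one mult_left_le)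
    qed
    ultimately have tT: "t \<ge> T" by linarith
    have "e (t * \<mu>) \<le> B * r ^ n"
      using Suc.IH[of "t * \<mu>"] h1 h2 by (simp add: mult.commute mult.left_commute)
    then have "r * e (t * \<mu>) \<le> r * (B * r ^ n)" using r by (simp add: mult_left_mono)
    then show "e t \<le> B * r ^ Suc n" using rec[OF tT] by (simp add: mult.commute mult.left_commute)
  qed
  have "(\<lambda>n. B * r ^ n) \<longlonglongrightarrow> B * 0"
    using r by (intro tendsto_mult tendsto_const LIMSEQ_power_zero) auto
  then have "eventually (\<lambda>n. B * r ^ n < \<epsilon>) sequentially"
    using eps by (intro order_tendstoD) auto
  then obtain N where N: "B * r ^ N < \<epsilon>" by (auto simp: eventually_sequentially)
  show ?thesis
  proof (rule eventually_at_top_linorderI[of "T / \<mu> ^ N"])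
    fix t assume t: "t \<ge> T / \<mu> ^ N"
    have muN: "\<mu> ^ N > 0" using mu by simp
    have tT: "t \<ge> T"
    proof -
      have "\<mu> ^ N \<le> 1" using mu by (simp add: power_le_one)
      then have "T / \<mu> ^ N \<ge> T" using T muN by (simp add: le_divide_eq)
      then show ?thesis using t by linarith
    qed
    have ex: "\<exists>k. t * \<mu> ^ k \<le> T"
    proof -
      have "(\<lambda>k. t * \<mu> ^ k) \<longlonglongrightarrow> t * 0"
        using mu by (intro tendsto_mult tendsto_const LIMSEQ_power_zero) auto
      then have "eventually (\<lambda>k. t * \<mu> ^ k < T) sequentially"
        using T by (intro order_tendstoD) auto
      then show ?thesis by (auto simp: eventually_sequentially intro: less_imp_le)
    qed
    define n where "n = (LEAST k. t * \<mu> ^ k \<le> T)"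
    have n1: "t * \<mu> ^ n \<le> T" unfolding n_def using ex by (rule LeastI_ex)
    have nN: "n \<ge> N"
    proof -
      have "T * \<mu> ^ n / \<mu> ^ N \<le> t * \<mu> ^ n"
        using t mu muN by (simp add: divide_le_eq mult_right_mono mult.commute mult.left_commute)
      then have "T * \<mu> ^ n / \<mu> ^ N \<le> T" using n1 by linarith
      then have "\<mu> ^ n \<le> \<mu> ^ N" using T muN by (simp add: divide_le_eq)
      then show ?thesis using mu by (simp add: power_decreasing_iff)
    qed
    have n2: "T * \<mu> \<le> t * \<mu> ^ n"
    proof (cases n)
      case 0
      have "T * \<mu> \<le> T" using mu T by (simp add: mult_left_le)
      then show ?thesis using tT 0 by simp
    next
      case (Suc m)
      have "\<not> (t * \<mu> ^ m \<le> T)" using not_less_Least[of m "\<lambda>k. t * \<mu> ^ k \<le> T"] Suc n_def by auto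
      then have "T < t * \<mu> ^ m" by simp
      then have "T * \<mu> < t * \<mu> ^ m * \<mu>" using mu by simp
      then show ?thesis using Suc by (simp add: mult.commute mult.left_commute)
    qed
    have "e t \<le> B * r ^ n" using claim[OF n2 n1] .
    also have "\<dots> \<le> B * r ^ N" using B r nN by (intro mult_left_mono power_decreasing) auto
    finally show "e t \<le> \<epsilon>" using N by linarith
  qed
qed



lemma sandwich_upper:
  fixes D qt upt :: "real \<Rightarrow> real"
  assumes mu: "0 < \<mu>" "\<mu> < 1" and Dnn: "\<And>t. t > 0 \<Longrightarrow> D t \<ge> 0"
    and bnd: "\<And>T. T > 0 \<Longrightarrow> \<exists>B. \<forall>s. T * \<mu> \<le> s \<and> s \<le> T \<longrightarrow> D s \<le> B"
    and q: "(qt \<longlongrightarrow> q) at_top" "0 \<le> q" "q < 1"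
    and up: "(upt \<longlongrightarrow> u) at_top"
    and rec: "eventually (\<lambda>t. D t \<le> qt t * D (t * \<mu>) + upt t) at_top"
    and eps: "\<epsilon> > 0"
  shows "eventually (\<lambda>t. D t < u / (1 - q) + \<epsilon>) at_top"
proof -
  have lim: "((\<lambda>\<eta>. (u + \<eta>) / (1 - (q + \<eta>))) \<longlongrightarrow> (u + 0) / (1 - (q + 0))) (at_right 0)"
    using q by (intro tendsto_intros) auto
  have ev: "eventually (\<lambda>\<eta>. (u + \<eta>) / (1 - (q + \<eta>)) < u / (1 - q) + \<epsilon>/2 \<and> q + \<eta> < 1 \<and> \<eta> > 0) (at_right (0::real))"
  proof (intro eventually_conj)
    show "\<forall>\<^sub>F \<eta> in at_right 0. (u + \<eta>) / (1 - (q + \<eta>)) < u / (1 - q) + \<epsilon> / 2"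
      using lim eps by (intro order_tendstoD) auto
    have "((\<lambda>\<eta>. q + \<eta>) \<longlongrightarrow> q + 0) (at_right (0::real))" by (intro tendsto_intros)
    then show "\<forall>\<^sub>F \<eta> in at_right 0. q + \<eta> < 1" using q by (intro order_tendstoD) auto
    show "\<forall>\<^sub>F \<eta> in at_right 0. \<eta> > (0::real)" by (rule eventually_at_right_less)
  qed
  obtain \<eta> where eta: "(u + \<eta>) / (1 - (q + \<eta>)) < u / (1 - q) + \<epsilon>/2" "q + \<eta> < 1" "\<eta> > 0"
    using eventually_happens[OF ev] by auto
  have "eventually (\<lambda>t. qt t < q + \<eta> \<and> upt t < u + \<eta> \<and> D t \<le> qt t * D (t * \<mu>) + upt t) at_top"
    using q(1) up rec eta by (intro eventually_conj order_tendstoD) auto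
  then obtain T0 where T0: "\<And>t. t \<ge> T0 \<Longrightarrow> qt t < q + \<eta> \<and> upt t < u + \<eta> \<and> D t \<le> qt t * D (t * \<mu>) + upt t"
    by (auto simp: eventually_at_top_linorder)
  define T where "T = max T0 1"
  have T: "T > 0" "T \<ge> T0" unfolding T_def by auto
  obtain B where B: "\<And>s. T * \<mu> \<le> s \<Longrightarrow> s \<le> T \<Longrightarrow> D s \<le> B" using bnd[OF T(1)] by auto
  define r where "r = q + \<eta>"
  define U where "U = (u + \<eta>) / (1 - r)"
  have r: "0 \<le> r" "r < 1" using q eta unfolding r_def by auto
  have UU: "u + \<eta> = U * (1 - r)" unfolding U_def using r by auto
  have "eventually (\<lambda>t. D t - U \<le> \<epsilon>/2) at_top"
  proof (rule geom_decay[OF mu T(1) r, of "max (B - U) 0"])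
    fix t assume t: "t \<ge> T"
    then have tp: "t > 0" using T by linarith
    have Dm: "D (t * \<mu>) \<ge> 0" using Dnn tp mu by simp
    have h: "qt t < r" "upt t < u + \<eta>" "D t \<le> qt t * D (t * \<mu>) + upt t" using T0[of t] t T r_def by auto
    have "qt t * D (t * \<mu>) \<le> r * D (t * \<mu>)" using h(1) Dm by (simp add: mult_right_mono)
    then have "D t \<le> r * D (t * \<mu>) + U * (1 - r)" using h UU by linarith
    then show "D t - U \<le> r * (D (t * \<mu>) - U)" by (simp add: algebra_simps)
  next
    fix s assume "T * \<mu> \<le> s" "s \<le> T"
    then show "D s - U \<le> max (B - U) 0" using B by fastforce
  qed (use eps in auto)
  then show ?thesis
  proof eventually_elim
    case (elim t)
    have "U < u / (1 - q) + \<epsilon>/2" using eta(1) unfolding U_def r_def .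
    then show ?case using elim by linarith
  qed
qed

lemma sandwich_lower:
  fixes D qt lot :: "real \<Rightarrow> real"
  assumes mu: "0 < \<mu>" "\<mu> < 1" and Dnn: "\<And>t. t > 0 \<Longrightarrow> D t \<ge> 0"
    and q: "(qt \<longlongrightarrow> q) at_top" "0 < q" "q < 1"
    and lo: "(lot \<longlongrightarrow> l) at_top"
    and rec: "eventually (\<lambda>t. D t \<ge> qt t * D (t * \<mu>) + lot t) at_top"
    and eps: "\<epsilon> > 0"
  shows "eventually (\<lambda>t. D t > l / (1 - q) - \<epsilon>) at_top"
proof -
  have lim: "((\<lambda>\<eta>. (l - \<eta>) / (1 - (q - \<eta>))) \<longlongrightarrow> (l - 0) / (1 - (q - 0))) (at_right 0)"
    using q by (intro tendsto_intros) auto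
  have ev: "eventually (\<lambda>\<eta>. (l - \<eta>) / (1 - (q - \<eta>)) > l / (1 - q) - \<epsilon>/2 \<and> q - \<eta> > 0 \<and> \<eta> > 0) (at_right (0::real))"
  proof (intro eventually_conj)
    show "\<forall>\<^sub>F \<eta> in at_right 0. (l - \<eta>) / (1 - (q - \<eta>)) > l / (1 - q) - \<epsilon> / 2"
      using lim eps by (intro order_tendstoD) auto
    have "((\<lambda>\<eta>. q - \<eta>) \<longlongrightarrow> q - 0) (at_right (0::real))" by (intro tendsto_intros)
    then show "\<forall>\<^sub>F \<eta> in at_right 0. q - \<eta> > 0" using q by (intro order_tendstoD) auto
    show "\<forall>\<^sub>F \<eta> in at_right 0. \<eta> > (0::real)" by (rule eventually_at_right_less)
  qed
  obtain \<eta> where eta: "(l - \<eta>) / (1 - (q - \<eta>)) > l / (1 - q) - \<epsilon>/2" "q - \<eta> > 0" "\<eta> > 0"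
    using eventually_happens[OF ev] by auto
  have "eventually (\<lambda>t. qt t > q - \<eta> \<and> lot t > l - \<eta> \<and> D t \<ge> qt t * D (t * \<mu>) + lot t) at_top"
    using q(1) lo rec eta by (intro eventually_conj order_tendstoD) auto
  then obtain T0 where T0: "\<And>t. t \<ge> T0 \<Longrightarrow> qt t > q - \<eta> \<and> lot t > l - \<eta> \<and> D t \<ge> qt t * D (t * \<mu>) + lot t"
    by (auto simp: eventually_at_top_linorder)
  define T where "T = max T0 1"
  have T: "T > 0" "T \<ge> T0" unfolding T_def by auto
  define r where "r = q - \<eta>"
  define W where "W = (l - \<eta>) / (1 - r)"
  have r: "0 \<le> r" "r < 1" using q eta unfolding r_def by auto
  have WW: "l - \<eta> = W * (1 - r)" unfolding W_def using r by auto
  have "eventually (\<lambda>t. W - D t \<le> \<epsilon>/2) at_top"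
  proof (rule geom_decay[OF mu T(1) r, of "max W 0"])
    fix t assume t: "t \<ge> T"
    then have tp: "t > 0" using T by linarith
    have Dm: "D (t * \<mu>) \<ge> 0" using Dnn tp mu by simp
    have h: "qt t > r" "lot t > l - \<eta>" "D t \<ge> qt t * D (t * \<mu>) + lot t" using T0[of t] t T r_def by auto
    have "qt t * D (t * \<mu>) \<ge> r * D (t * \<mu>)" using h(1) Dm by (simp add: mult_right_mono)
    then have "D t \<ge> r * D (t * \<mu>) + W * (1 - r)" using h WW by linarith
    then show "W - D t \<le> r * (W - D (t * \<mu>))" by (simp add: algebra_simps)
  next
    fix s assume "T * \<mu> \<le> s" "s \<le> T"
    then have "s > 0" using T mu by (smt (verit) mult_pos_pos)
    then show "W - D s \<le> max W 0" using Dnn by fastforce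
  qed (use eps in auto)
  then show ?thesis
  proof eventually_elim
    case (elim t)
    have "W > l / (1 - q) - \<epsilon>/2" using eta(1) unfolding W_def r_def .
    then show ?case using elim by linarith
  qed
qed



lemma rv_tendsto: "regularly_varying f a \<Longrightarrow> x > 0 \<Longrightarrow> ((\<lambda>t. f (t * x) / f t) \<longlongrightarrow> x powr a) at_top"
  unfolding regularly_varying_def by auto

lemma filterlim_times_const_at_top: "(x::real) > 0 \<Longrightarrow> filterlim (\<lambda>t. t * x) at_top at_top"
  by real_asymp

lemma rv_pos:
  fixes f :: "real \<Rightarrow> real"
  assumes anti: "\<And>s t. s \<le> t \<Longrightarrow> f t \<le> f s" and nn: "\<And>t. f t \<ge> 0" and rv: "regularly_varying f a"
  shows "f t > 0"
proof (rule ccontr)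
  assume "\<not> f t > 0"
  then have z: "f t = 0" using nn[of t] by linarith
  have "eventually (\<lambda>s. f (s * 2) / f s = 0) at_top"
  proof (rule eventually_at_top_linorderI[of "max t 0"])
    fix s assume "s \<ge> max t 0"
    then have "f s \<le> f t" using anti by auto
    then have "f s = 0" using z nn[of s] by linarith
    then show "f (s * 2) / f s = 0" by simp
  qed
  then have "((\<lambda>s. f (s * 2) / f s) \<longlongrightarrow> 0) at_top" by (rule tendsto_eventually)
  moreover have "((\<lambda>s. f (s * 2) / f s) \<longlongrightarrow> 2 powr a) at_top" using rv_tendsto[OF rv] by simp
  ultimately have "2 powr a = (0::real)" using tendsto_unique[OF trivial_limit_at_top_linorder] by blast
  then show False by simp
qed

lemma rv_mult:
  assumes "regularly_varying f a" "regularly_varying g b"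
  shows "regularly_varying (\<lambda>t. f t * g t) (a + b)"
  unfolding regularly_varying_def
proof (intro allI impI)
  fix x :: real assume x: "x > 0"
  have "((\<lambda>t. (f (t * x) / f t) * (g (t * x) / g t)) \<longlongrightarrow> x powr a * x powr b) at_top"
    using rv_tendsto[OF assms(1) x] rv_tendsto[OF assms(2) x] by (rule tendsto_mult)
  then show "((\<lambda>t. f (t * x) * g (t * x) / (f t * g t)) \<longlongrightarrow> x powr (a + b)) at_top"
    by (simp add: powr_add)
qed

lemma rv_ratio_zero:
  fixes f g :: "real \<Rightarrow> real"
  assumes antig: "\<And>s t. s \<le> t \<Longrightarrow> g t \<le> g s"
    and fpos: "\<And>t. f t > 0" and gpos: "\<And>t. g t > 0" and f1: "\<And>t. f t \<le> 1"
    and rvf: "regularly_varying f a" and rvg: "regularly_varying g b" and ab: "a < b"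
  shows "((\<lambda>t. f t / g t) \<longlongrightarrow> 0) at_top"
proof -
  define \<mu> :: real where "\<mu> = 1/2"
  have mu: "0 < \<mu>" "\<mu> < 1" unfolding \<mu>_def by auto
  define h where "h t = f t / g t" for t
  have hpos: "h t > 0" for t using fpos gpos unfolding h_def by simp
  have lim1: "((\<lambda>t. inverse (f (t * \<mu>) / f t) * (g (t * \<mu>) / g t)) \<longlongrightarrow> inverse (\<mu> powr a) * \<mu> powr b) at_top"
    using rv_tendsto[OF rvf mu(1)] rv_tendsto[OF rvg mu(1)] mu by (intro tendsto_intros) auto
  have eq: "inverse (f (t * \<mu>) / f t) * (g (t * \<mu>) / g t) = h t / h (t * \<mu>)" for t
    using fpos gpos unfolding h_def by (simp add: field_simps)
  have "inverse (\<mu> powr a) * \<mu> powr b = \<mu> powr (b - a)"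
    by (simp add: powr_diff powr_minus divide_inverse mult.commute)
  moreover have "\<mu> powr (b - a) < 1" using powr_less_mono2[of "b-a" \<mu> 1] mu ab by simp
  ultimately have lim2: "((\<lambda>t. h t / h (t * \<mu>)) \<longlongrightarrow> \<mu> powr (b - a)) at_top" "\<mu> powr (b - a) < 1"
    using lim1 eq by auto
  define r where "r = (1 + \<mu> powr (b - a)) / 2"
  have r: "0 \<le> r" "r < 1" "\<mu> powr (b - a) < r" unfolding r_def using lim2(2) by auto
  have "eventually (\<lambda>t. h t / h (t * \<mu>) < r) at_top" using lim2 r by (intro order_tendstoD) auto
  then obtain T0 where T0: "\<And>t. t \<ge> T0 \<Longrightarrow> h t / h (t * \<mu>) < r" by (auto simp: eventually_at_top_linorder)
  define T where "T = max T0 1"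
  have T: "T > 0" "T \<ge> T0" unfolding T_def by auto
  have ev: "eventually (\<lambda>t. h t \<le> \<epsilon>) at_top" if eps: "\<epsilon> > 0" for \<epsilon>
  proof (rule geom_decay[OF mu T(1) r(1,2), of "1 / g T"])
    show "0 \<le> 1 / g T" using gpos[of T] by simp
    fix t assume "T \<le> t"
    then have "h t / h (t * \<mu>) < r" using T0 T by auto
    then show "h t \<le> r * h (t * \<mu>)" using hpos[of "t * \<mu>"] by (simp add: divide_less_eq)
  next
    fix s assume "T * \<mu> \<le> s" "s \<le> T"
    have "g T \<le> g s" using antig `s \<le> T` by auto
    then have "f s / g s \<le> 1 / g T" using f1[of s] fpos[of s] gpos[of s] gpos[of T]
      by (simp add: frac_le)
    then show "h s \<le> 1 / g T" unfolding h_def .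
  qed (use eps in auto)
  show ?thesis
  proof (rule order_tendstoI)
    fix y :: real assume "y < 0"
    then show "eventually (\<lambda>t. f t / g t > y) at_top" using hpos unfolding h_def
      by (auto intro: always_eventually less_trans)
  next
    fix y :: real assume y: "y > 0"
    have "eventually (\<lambda>t. h t \<le> y / 2) at_top" using ev[of "y/2"] y by linarith
    then show "eventually (\<lambda>t. f t / g t < y) at_top"
      proof eventually_elim
      case (elim t) then show ?case using y unfolding h_def by linarith
    qed
  qed
qed

lemma rv_sum:
  fixes f :: "nat \<Rightarrow> real \<Rightarrow> real" and J :: "nat set"
  assumes J: "finite J" "jm \<in> J" and pos: "\<And>j t. j \<in> J \<Longrightarrow> f j t > 0"
    and rv: "\<And>j. j \<in> J \<Longrightarrow> regularly_varying (f j) (a j)"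
    and a0: "a jm = \<alpha>"
    and dom: "\<And>j. j \<in> J \<Longrightarrow> a j = \<alpha> \<or> ((\<lambda>t. f j t / f jm t) \<longlongrightarrow> 0) at_top"
  shows "regularly_varying (\<lambda>t. \<Sum>j\<in>J. f j t) \<alpha>"
  unfolding regularly_varying_def
proof (intro allI impI)
  fix x :: real assume x: "x > 0"
  define S where "S t = (\<Sum>j\<in>J. f j t)" for t
  have Sge: "f j t \<le> S t" if "j \<in> J" for j t
    unfolding S_def using J pos that by (intro member_le_sum) (auto intro: less_imp_le)
  have Spos: "S t > 0" for t using Sge[OF J(2), of t] pos[OF J(2), of t] by linarith
  define w where "w j t = f j t / S t" for j t
  define r where "r j t = f j (t * x) / f j t" for j t
  have ident: "(\<Sum>j\<in>J. f j (t * x)) / (\<Sum>j\<in>J. f j t) = x powr \<alpha> + (\<Sum>j\<in>J. w j t * (r j t - x powr \<alpha>))" for t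
  proof -
    have "(\<Sum>j\<in>J. w j t * (r j t - x powr \<alpha>)) = (\<Sum>j\<in>J. f j (t * x) / S t - x powr \<alpha> * (f j t / S t))"
    proof (rule sum.cong[OF refl])
      fix j assume "j \<in> J"
      then have "f j t > 0" "S t > 0" using pos Spos by auto
      then show "w j t * (r j t - x powr \<alpha>) = f j (t * x) / S t - x powr \<alpha> * (f j t / S t)"
        unfolding w_def r_def by (simp add: field_simps)
    qed
    also have "\<dots> = (\<Sum>j\<in>J. f j (t * x)) / S t - x powr \<alpha> * ((\<Sum>j\<in>J. f j t) / S t)"
      by (simp add: sum_subtractf sum_divide_distrib sum_distrib_left)
    also have "\<dots> = (\<Sum>j\<in>J. f j (t * x)) / S t - x powr \<alpha>" using Spos[of t] unfolding S_def by simp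
    finally show ?thesis unfolding S_def by simp
  qed
  have terms: "((\<lambda>t. w j t * (r j t - x powr \<alpha>)) \<longlongrightarrow> 0) at_top" if j: "j \<in> J" for j
  proof -
    have rl: "(r j \<longlongrightarrow> x powr a j) at_top" unfolding r_def using rv_tendsto[OF rv[OF j] x] .
    have w01: "0 \<le> w j t" "w j t \<le> 1" for t
      using pos[OF j, of t] Sge[OF j, of t] Spos[of t] unfolding w_def by auto
    from dom[OF j] show ?thesis
    proof
      assume aj: "a j = \<alpha>"
      have "((\<lambda>t. \<bar>r j t - x powr \<alpha>\<bar>) \<longlongrightarrow> \<bar>x powr \<alpha> - x powr \<alpha>\<bar>) at_top"
        using rl aj by (intro tendsto_intros) auto
      then have z: "((\<lambda>t. \<bar>r j t - x powr \<alpha>\<bar>) \<longlongrightarrow> 0) at_top" by simp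
      show ?thesis
      proof (rule Lim_null_comparison[OF _ z], intro always_eventually allI)
        fix t
        have "\<bar>w j t\<bar> * \<bar>r j t - x powr \<alpha>\<bar> \<le> 1 * \<bar>r j t - x powr \<alpha>\<bar>"
          using w01[of t] by (intro mult_right_mono) auto
        then show "norm (w j t * (r j t - x powr \<alpha>)) \<le> \<bar>r j t - x powr \<alpha>\<bar>" by (simp add: abs_mult)
      qed
    next
      assume z: "((\<lambda>t. f j t / f jm t) \<longlongrightarrow> 0) at_top"
      have wz: "(w j \<longlongrightarrow> 0) at_top"
      proof (rule Lim_null_comparison[OF _ z], intro always_eventually allI)
        fix t
        have "f j t / S t \<le> f j t / f jm t"
          using pos[OF j, of t] pos[OF J(2), of t] Sge[OF J(2), of t] by (intro divide_left_mono) auto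
        then show "norm (w j t) \<le> f j t / f jm t" using w01[of t] unfolding w_def by simp
      qed
      have "((\<lambda>t. w j t * (r j t - x powr \<alpha>)) \<longlongrightarrow> 0 * (x powr a j - x powr \<alpha>)) at_top"
        using wz rl by (intro tendsto_intros)
      then show ?thesis by simp
    qed
  qed
  have "((\<lambda>t. x powr \<alpha> + (\<Sum>j\<in>J. w j t * (r j t - x powr \<alpha>))) \<longlongrightarrow> x powr \<alpha> + (\<Sum>j\<in>J. 0)) at_top"
    using terms by (intro tendsto_add tendsto_const tendsto_sum) auto
  then show "((\<lambda>t. (\<Sum>j\<in>J. f j (t * x)) / (\<Sum>j\<in>J. f j t)) \<longlongrightarrow> x powr \<alpha>) at_top"
    unfolding ident by simp
qed

lemma mu_lim_up: "a > 0 \<Longrightarrow> (c::real) > 0 \<Longrightarrow> ((\<lambda>m::real. (m powr (-a) - 1)/(1 - m powr c)) \<longlongrightarrow> a * inverse c) (at_left 1)"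
  by real_asymp

lemma mu_lim_lo: "a > 0 \<Longrightarrow> (c::real) > 0 \<Longrightarrow> ((\<lambda>m::real. (1 - m powr a) * m powr c/(1 - m powr c)) \<longlongrightarrow> a * inverse c) (at_left 1)"
  by real_asymp

lemma ev_mu01: "eventually (\<lambda>m::real. 0 < m \<and> m < 1) (at_left 1)"
proof -
  have "((\<lambda>m::real. m) \<longlongrightarrow> 1) (at_left 1)" by (rule tendsto_ident_at)
  then have "eventually (\<lambda>m::real. m > 0) (at_left 1)" by (rule order_tendstoD) simp
  moreover have "eventually (\<lambda>m::real. m < 1) (at_left 1)" by (simp add: eventually_at_filter)
  ultimately show ?thesis by (rule eventually_conj)
qed



theorem lemma8:
  fixes M :: "'a measure" and X Cc :: "'a \<Rightarrow> real" and cause :: "'a \<Rightarrow> nat"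
    and K :: nat and gam_j :: "nat \<Rightarrow> real" and gam_C \<delta> :: real
  assumes "prob_space M" and "K \<ge> 1"
    and "X \<in> borel_measurable M" and "Cc \<in> borel_measurable M"
    and "cause \<in> measurable M (count_space UNIV)"
    and "\<forall>\<omega>\<in>space M. X \<omega> \<ge> 0 \<and> cause \<omega> \<in> {1..K} \<and> Cc \<omega> \<ge> 0"
    and "\<forall>A\<in>sets (borel \<Otimes>\<^sub>M count_space UNIV). \<forall>B\<in>sets (borel :: real measure).
           measure M {\<omega>\<in>space M. (X \<omega>, cause \<omega>) \<in> A \<and> Cc \<omega> \<in> B} =
           measure M {\<omega>\<in>space M. (X \<omega>, cause \<omega>) \<in> A} * measure M {\<omega>\<in>space M. Cc \<omega> \<in> B}"
  defines "F \<equiv> \<lambda>t. measure M {\<omega>\<in>space M. X \<omega> \<le> t}"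
    and "barFj \<equiv> \<lambda>j t. measure M {\<omega>\<in>space M. X \<omega> > t \<and> cause \<omega> = j}"
    and "G \<equiv> \<lambda>t. measure M {\<omega>\<in>space M. Cc \<omega> \<le> t}"
  defines "barF \<equiv> \<lambda>t. 1 - F t"
    and "barG \<equiv> \<lambda>t. 1 - G t"
  defines "barH \<equiv> \<lambda>t. barF t * barG t"
    and "gam_F \<equiv> Max (gam_j ` {1..K})"
  defines "gam \<equiv> 1 / (1 / gam_F + 1 / gam_C)"
    and "C_\<delta> \<equiv> \<lambda>t. LINT v:{0..t}|distr M borel Cc. 1 / (barG v * barH v powr \<delta>)"
  assumes "continuous_on UNIV F" and "continuous_on UNIV G"
    and "\<forall>j\<in>{1..K}. gam_j j > 0 \<and> regularly_varying (barFj j) (- 1 / gam_j j)"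
    and "gam_C > 0" and "regularly_varying barG (- 1 / gam_C)"
    and "\<delta> > 0"
  shows "regularly_varying C_\<delta> (\<delta> / gam) \<and>
         C_\<delta> \<sim>[at_top] (\<lambda>t. (gam / gam_C) / (\<delta> * barH t powr \<delta>))"
proof -
  interpret P: prob_space M by (rule assms(1))
  note [measurable] = assms(3) assms(4) assms(5)
  note rvFj = assms(19) and gC = assms(20) and rvG = assms(21) and dpos = assms(22)
  have Fset: "{\<omega>\<in>space M. X \<omega> \<le> t} \<in> sets M" for t by measurable
  have Gset: "{\<omega>\<in>space M. Cc \<omega> \<le> t} \<in> sets M" for t by measurable
  have Fjset: "{\<omega>\<in>space M. X \<omega> > t \<and> cause \<omega> = j} \<in> sets M" for t j by measurable
  have G_mono: "G s \<le> G t" if "s \<le> t" for s t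
    unfolding G_def using that Gset by (intro P.finite_measure_mono) auto
  have Fj_anti: "barFj j t \<le> barFj j s" if "s \<le> t" for j s t
    unfolding barFj_def using that Fjset by (intro P.finite_measure_mono) auto
  have Fj_le1: "barFj j t \<le> 1" "barFj j t \<ge> 0" for j t unfolding barFj_def by auto
  have G01: "G t \<le> 1" "G t \<ge> 0" for t unfolding G_def by auto
  have barG_anti: "barG t \<le> barG s" if "s \<le> t" for s t unfolding barG_def using G_mono[OF that] by simp
  have barG01: "barG t \<le> 1" "barG t \<ge> 0" for t unfolding barG_def using G01[of t] by auto
  have barG_pos: "barG t > 0" for t using rv_pos[OF barG_anti barG01(2) rvG] .
  have Fj_pos: "barFj j t > 0" if "j \<in> {1..K}" for j t
  proof -
    have "regularly_varying (barFj j) (- 1 / gam_j j)" using rvFj that by blast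
    then show ?thesis by (rule rv_pos[rotated 2]) (use Fj_anti Fj_le1 in auto)
  qed
  have barF_sum: "barF t = (\<Sum>j\<in>{1..K}. barFj j t)" for t
  proof -
    have "barF t = measure M (space M - {\<omega>\<in>space M. X \<omega> \<le> t})"
      unfolding barF_def F_def using P.prob_compl[OF Fset] by simp
    also have "space M - {\<omega>\<in>space M. X \<omega> \<le> t} = (\<Union>j\<in>{1..K}. {\<omega>\<in>space M. X \<omega> > t \<and> cause \<omega> = j})"
      using assms(6) by auto
    also have "measure M \<dots> = (\<Sum>j\<in>{1..K}. barFj j t)"
      unfolding barFj_def
      by (rule P.finite_measure_finite_Union) (auto simp: Fjset disjoint_family_on_def)
    finally show ?thesis .
  qed
  have Kne: "{1..K} \<noteq> {}" using assms(2) by auto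
  have gFin: "gam_F \<in> gam_j ` {1..K}" unfolding gam_F_def using Kne by (intro Max_in) auto
  then obtain j0 where j0: "j0 \<in> {1..K}" "gam_j j0 = gam_F" by auto
  have gj_le: "gam_j j \<le> gam_F" if "j \<in> {1..K}" for j unfolding gam_F_def using that by (intro Max_ge) auto
  have gj_pos: "gam_j j > 0" if "j \<in> {1..K}" for j using rvFj that by blast
  have gF: "gam_F > 0" using gj_pos[OF j0(1)] j0(2) by simp
  have rvFj': "regularly_varying (barFj j) (- 1 / gam_j j)" if "j \<in> {1..K}" for j using rvFj that by blast
  have rvF: "regularly_varying barF (- 1 / gam_F)"
  proof -
    have "regularly_varying (\<lambda>t. \<Sum>j\<in>{1..K}. barFj j t) (- 1 / gam_F)"
    proof (rule rv_sum[where a = "\<lambda>j. - 1 / gam_j j" and jm = j0])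
      show "finite {1..K}" "j0 \<in> {1..K}" using j0 by auto
      show "\<And>j t. j \<in> {1..K} \<Longrightarrow> 0 < barFj j t" by (rule Fj_pos)
      show "\<And>j. j \<in> {1..K} \<Longrightarrow> regularly_varying (barFj j) (- 1 / gam_j j)" by (rule rvFj')
      show "- 1 / gam_j j0 = - 1 / gam_F" using j0 by simp
      fix j assume j: "j \<in> {1..K}"
      show "- 1 / gam_j j = - 1 / gam_F \<or> ((\<lambda>t. barFj j t / barFj j0 t) \<longlongrightarrow> 0) at_top"
      proof (cases "gam_j j = gam_F")
        case True then show ?thesis by simp
      next
        case False
        then have lt: "gam_j j < gam_F" using gj_le[OF j] by simp
        have "- 1 / gam_j j < - 1 / gam_j j0"
          using lt gj_pos[OF j] j0 by (simp add: divide_less_eq frac_less2)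
        then have "((\<lambda>t. barFj j t / barFj j0 t) \<longlongrightarrow> 0) at_top"
          by (intro rv_ratio_zero[OF _ _ _ _ rvFj'[OF j] rvFj'[OF j0(1)]])
             (use Fj_anti Fj_pos j j0 Fj_le1 in auto)
        then show ?thesis by simp
      qed
    qed
    moreover have "barF = (\<lambda>t. \<Sum>j\<in>{1..K}. barFj j t)" using barF_sum by auto
    ultimately show ?thesis by simp
  qed
  have barF_pos: "barF t > 0" for t
    unfolding barF_sum using Fj_pos assms(2) by (intro sum_pos) auto
  have barF_anti: "barF t \<le> barF s" if "s \<le> t" for s t
    unfolding barF_sum using Fj_anti[OF that] by (intro sum_mono) auto
  have barF_le1: "barF t \<le> 1" for t unfolding barF_def F_def by simp
  have barH_pos: "barH t > 0" for t unfolding barH_def using barF_pos barG_pos by simp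
  have barH_le1: "barH t \<le> 1" for t unfolding barH_def
    using barF_pos[of t] barG_pos[of t] barF_le1[of t] barG01[of t] by (simp add: mult_le_one)
  have barH_anti: "barH t \<le> barH s" if "s \<le> t" for s t unfolding barH_def
    using barF_anti[OF that] barG_anti[OF that] barF_pos barG_pos by (intro mult_mono) (auto intro: less_imp_le)
  have sum_pos: "1 / gam_F + 1 / gam_C > 0" using gF gC by (simp add: add_pos_pos)
  have gam_pos: "gam > 0" unfolding gam_def using sum_pos by simp
  have inv_gam: "1 / gam = 1 / gam_F + 1 / gam_C" unfolding gam_def using sum_pos by simp
  have rvH: "regularly_varying barH (- 1 / gam)"
  proof -
    have "regularly_varying (\<lambda>t. barF t * barG t) (- 1 / gam_F + - 1 / gam_C)"
      by (rule rv_mult[OF rvF rvG])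
    moreover have "- 1 / gam_F + - 1 / gam_C = - 1 / gam" using inv_gam by (simp add: field_simps)
    ultimately show ?thesis unfolding barH_def by simp
  qed
  define \<nu> where "\<nu> = distr M borel Cc"
  define \<phi> where "\<phi> v = 1 / (barG v * barH v powr \<delta>)" for v
  have Cdef: "C_\<delta> t = (LINT v:{0..t}|\<nu>. \<phi> v)" for t unfolding C_\<delta>_def \<nu>_def \<phi>_def by simp
  interpret N: prob_space \<nu> unfolding \<nu>_def by (rule P.prob_space_distr) simp
  have sets_nu: "sets \<nu> = sets borel" unfolding \<nu>_def by simp
  have nu_Ioc: "measure \<nu> {a<..b} = barG a - barG b" if "a \<le> b" for a b
  proof -
    have "measure \<nu> {a<..b} = measure M (Cc -` {a<..b} \<inter> space M)"
      unfolding \<nu>_def by (rule measure_distr) auto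
    also have "Cc -` {a<..b} \<inter> space M = {\<omega>\<in>space M. Cc \<omega> \<le> b} - {\<omega>\<in>space M. Cc \<omega> \<le> a}" by auto
    also have "measure M \<dots> = G b - G a" unfolding G_def
      using that by (intro P.finite_measure_Diff Gset) auto
    finally show ?thesis unfolding barG_def by simp
  qed
  have hd_pos: "barH v powr \<delta> > 0" for v using barH_pos[of v] by simp
  have hd_le1: "barH v powr \<delta> \<le> 1" for v using barH_pos[of v] barH_le1[of v] dpos by (intro powr_le1) auto
  have phi_pos: "\<phi> v > 0" for v unfolding \<phi>_def using barG_pos[of v] hd_pos[of v] by simp
  have phi_mono: "\<phi> s \<le> \<phi> t" if "s \<le> t" for s t
  proof -
    have "barH t powr \<delta> \<le> barH s powr \<delta>" using barH_anti[OF that] barH_pos dpos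
      by (intro powr_mono2) (auto intro: less_imp_le)
    then have "barG t * barH t powr \<delta> \<le> barG s * barH s powr \<delta>"
      using barG_anti[OF that] barG_pos hd_pos by (intro mult_mono) (auto intro: less_imp_le)
    moreover have "barG t * barH t powr \<delta> > 0" using barG_pos hd_pos by simp
    ultimately show ?thesis unfolding \<phi>_def by (simp add: frac_le)
  qed
  have meas_eq: "borel_measurable \<nu> = borel_measurable (borel :: real measure)"
    by (rule measurable_cong_sets[OF sets_nu refl])
  have phi_meas: "\<phi> \<in> borel_measurable borel" using phi_mono by (intro borel_measurable_mono) (auto simp: mono_def)
  have set_int: "set_integrable \<nu> A \<phi>" if "A \<in> sets borel" "A \<subseteq> {..t}" for A t
    unfolding set_integrable_def
  proof (rule N.integrable_const_bound[where B = "\<phi> t"])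
    show "AE x in \<nu>. norm (indicator A x *\<^sub>R \<phi> x) \<le> \<phi> t"
    proof (intro AE_I2)
      fix x show "norm (indicator A x *\<^sub>R \<phi> x) \<le> \<phi> t"
      proof (cases "x \<in> A")
        case True
        then have "x \<le> t" using that by auto
        then show ?thesis using True phi_mono[of x t] phi_pos[of x] by simp
      qed (use phi_pos[of t] in auto)
    qed
    show "(\<lambda>x. indicator A x *\<^sub>R \<phi> x) \<in> borel_measurable \<nu>"
      unfolding meas_eq using that(1) phi_meas by (intro borel_measurable_scaleR borel_measurable_indicator)
  qed
  have set_int_const: "set_integrable \<nu> A (\<lambda>v. c::real)" if "A \<in> sets borel" for A c
    unfolding set_integrable_def
  proof (rule N.integrable_const_bound[where B = "\<bar>c\<bar>"])
    show "AE x in \<nu>. norm (indicator A x *\<^sub>R c) \<le> \<bar>c\<bar>"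
      by (intro AE_I2) (auto simp: indicator_def)
    show "(\<lambda>x. indicator A x *\<^sub>R c) \<in> borel_measurable \<nu>"
      unfolding meas_eq using that(1) by (intro borel_measurable_scaleR borel_measurable_indicator borel_measurable_const)
  qed
  have int_const: "(LINT v:A|\<nu>. (c::real)) = measure \<nu> A * c" if "A \<in> sets borel" for A c
  proof -
    have A: "A \<in> sets \<nu>" using that sets_nu by blast
    show ?thesis using set_integral_const[OF A, of c] N.emeasure_finite[of A] by (simp add: top_ennreal_def)
  qed
  have Pc_bounds: "\<phi> s * (barG s - barG t) \<le> (LINT v:{s<..t}|\<nu>. \<phi> v) \<and>
                   (LINT v:{s<..t}|\<nu>. \<phi> v) \<le> \<phi> t * (barG s - barG t)" if st: "s \<le> t" for s t
  proof
    have "(LINT v:{s<..t}|\<nu>. \<phi> s) \<le> (LINT v:{s<..t}|\<nu>. \<phi> v)"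
      by (rule set_integral_mono[OF set_int_const set_int[of _ t]]) (auto intro: phi_mono)
    then show "\<phi> s * (barG s - barG t) \<le> (LINT v:{s<..t}|\<nu>. \<phi> v)"
      using int_const[of "{s<..t}" "\<phi> s"] nu_Ioc[OF st] by (simp add: mult.commute)
    have "(LINT v:{s<..t}|\<nu>. \<phi> v) \<le> (LINT v:{s<..t}|\<nu>. \<phi> t)"
      by (rule set_integral_mono[OF set_int[of _ t] set_int_const]) (auto intro: phi_mono)
    then show "(LINT v:{s<..t}|\<nu>. \<phi> v) \<le> \<phi> t * (barG s - barG t)"
      using int_const[of "{s<..t}" "\<phi> t"] nu_Ioc[OF st] by (simp add: mult.commute)
  qed
  have C_nn: "C_\<delta> t \<ge> 0" for t
  proof -
    have "(LINT v:{0..t}|\<nu>. 0) \<le> (LINT v:{0..t}|\<nu>. \<phi> v)"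
      by (rule set_integral_mono[OF set_int_const set_int[of _ t]]) (auto intro: less_imp_le phi_pos)
    then show ?thesis unfolding Cdef by simp
  qed
  have C_le: "C_\<delta> t \<le> \<phi> t" for t
  proof -
    have "(LINT v:{0..t}|\<nu>. \<phi> v) \<le> (LINT v:{0..t}|\<nu>. \<phi> t)"
      by (rule set_integral_mono[OF set_int[of _ t] set_int_const]) (auto intro: phi_mono)
    also have "\<dots> = measure \<nu> {0..t} * \<phi> t" by (rule int_const) simp
    also have "\<dots> \<le> 1 * \<phi> t" using phi_pos[of t] by (intro mult_right_mono) auto
    finally show ?thesis unfolding Cdef by simp
  qed
  have C_split: "C_\<delta> t = C_\<delta> (t * \<mu>) + (LINT v:{t * \<mu><..t}|\<nu>. \<phi> v)" if "t > 0" "0 < \<mu>" "\<mu> < 1" for t \<mu>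
  proof -
    have le: "t * \<mu> \<le> t" using that by (simp add: mult_left_le)
    have le0: "0 \<le> t * \<mu>" using that by simp
    have "{0..t} = {0..t * \<mu>} \<union> {t * \<mu><..t}" using le le0 by (auto simp del: mult_le_cancel_left1)
    then have "(LINT v:{0..t}|\<nu>. \<phi> v) = (LINT v:{0..t * \<mu>} \<union> {t * \<mu><..t}|\<nu>. \<phi> v)" by simp
    also have "\<dots> = (LINT v:{0..t * \<mu>}|\<nu>. \<phi> v) + (LINT v:{t * \<mu><..t}|\<nu>. \<phi> v)"
      by (rule set_integral_Un[OF _ set_int[of _ t] set_int[of _ t]]) (use le in auto)
    finally show ?thesis unfolding Cdef .
  qed
  define h where "h t = barH t powr \<delta>" for t
  define D where "D t = C_\<delta> t * h t" for t
  define a where "a = 1 / gam_C"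
  define c where "c = \<delta> / gam"
  have a_pos: "a > 0" and c_pos: "c > 0" unfolding a_def c_def using gC dpos gam_pos by auto
  have h_pos: "h t > 0" for t unfolding h_def by (rule hd_pos)
  have phi_h: "\<phi> t * h t = 1 / barG t" for t
    unfolding \<phi>_def h_def using hd_pos[of t] barG_pos[of t] by (simp add: field_simps)
  have D_nn: "D t \<ge> 0" for t unfolding D_def using C_nn h_pos by (simp add: less_imp_le)
  have D_le: "D t \<le> \<phi> t" for t
  proof -
    have "C_\<delta> t * h t \<le> C_\<delta> t * 1" using C_nn[of t] hd_le1[of t] unfolding h_def by (intro mult_left_mono) auto
    then show ?thesis unfolding D_def using C_le[of t] by simp
  qed
  have rvH_lim: "((\<lambda>t. barH (t * x) / barH t) \<longlongrightarrow> x powr (- 1 / gam)) at_top" if "x > 0" for x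
    using rv_tendsto[OF rvH that] .
  have rvG_lim: "((\<lambda>t. barG (t * x) / barG t) \<longlongrightarrow> x powr (- 1 / gam_C)) at_top" if "x > 0" for x
    using rv_tendsto[OF rvG that] .
  have inv_pow: "inverse (x powr (- 1 / g)) = x powr (1 / g)" if "x > 0" for x g :: real
    using that by (simp add: powr_minus[symmetric])
  have h_ratio_lim: "((\<lambda>t. h t / h (t * x)) \<longlongrightarrow> x powr (\<delta> / gam)) at_top" if x: "x > 0" for x
  proof -
    have "((\<lambda>t. inverse (barH (t * x) / barH t) powr \<delta>) \<longlongrightarrow> inverse (x powr (- 1 / gam)) powr \<delta>) at_top"
      using x by (intro tendsto_intros rvH_lim) auto
    moreover have "inverse (x powr (- 1 / gam)) powr \<delta> = x powr (\<delta> / gam)"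
      by (subst inv_pow[OF x]) (simp add: powr_powr)
    moreover have "inverse (barH (t * x) / barH t) powr \<delta> = h t / h (t * x)" for t
      unfolding h_def using barH_pos[of t] barH_pos[of "t * x"] by (simp add: powr_divide)
    ultimately show ?thesis by simp
  qed
  have bounds: "eventually (\<lambda>t. D t < (\<mu> powr (- a) - 1) / (1 - \<mu> powr c) + \<epsilon>) at_top \<and>
                eventually (\<lambda>t. D t > (1 - \<mu> powr a) * \<mu> powr c / (1 - \<mu> powr c) - \<epsilon>) at_top"
    if mu: "0 < \<mu>" "\<mu> < 1" and eps: "\<epsilon> > 0" for \<mu> \<epsilon>
  proof -
    define qt where "qt t = h t / h (t * \<mu>)" for t
    define upt where "upt t = barG (t * \<mu>) / barG t - 1" for t
    define lot where "lot t = (1 - barG t / barG (t * \<mu>)) * qt t" for t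
    have q_lim: "(qt \<longlongrightarrow> \<mu> powr c) at_top" unfolding qt_def c_def using h_ratio_lim[OF mu(1)] .
    have q01: "0 < \<mu> powr c" "\<mu> powr c < 1" using mu c_pos powr_less_mono2[of c \<mu> 1] by auto
    have up_lim: "(upt \<longlongrightarrow> \<mu> powr (- a) - 1) at_top"
    proof -
      have "(upt \<longlongrightarrow> \<mu> powr (- 1 / gam_C) - 1) at_top"
        unfolding upt_def using rvG_lim[OF mu(1)] by (intro tendsto_intros)
      moreover have "- 1 / gam_C = - a" unfolding a_def by simp
      ultimately show ?thesis by simp
    qed
    have lo_lim: "(lot \<longlongrightarrow> (1 - \<mu> powr a) * \<mu> powr c) at_top"
    proof -
      have "((\<lambda>t. (1 - inverse (barG (t * \<mu>) / barG t)) * qt t) \<longlongrightarrow> (1 - inverse (\<mu> powr (- 1 / gam_C))) * \<mu> powr c) at_top"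
        using mu by (intro tendsto_intros rvG_lim q_lim) auto
      moreover have "inverse (\<mu> powr (- 1 / gam_C)) = \<mu> powr a" unfolding a_def using inv_pow[OF mu(1)] .
      moreover have "(1 - inverse (barG (t * \<mu>) / barG t)) * qt t = lot t" for t
        unfolding lot_def by simp
      ultimately show ?thesis by simp
    qed
    have rec_eq: "D t = qt t * D (t * \<mu>) + (LINT v:{t * \<mu><..t}|\<nu>. \<phi> v) * h t" if "t > 0" for t
    proof -
      have "D t = C_\<delta> (t * \<mu>) * h t + (LINT v:{t * \<mu><..t}|\<nu>. \<phi> v) * h t"
        unfolding D_def using C_split[OF that mu] by (simp add: algebra_simps)
      moreover have "C_\<delta> (t * \<mu>) * h t = qt t * D (t * \<mu>)"
        unfolding qt_def D_def using h_pos[of "t * \<mu>"] by (simp add: field_simps)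
      ultimately show ?thesis by simp
    qed
    have le_tm: "t * \<mu> \<le> t" if "t > 0" for t using that mu by (simp add: mult_left_le)
    have rec_up: "D t \<le> qt t * D (t * \<mu>) + upt t" if "t > 0" for t
    proof -
      have "(LINT v:{t * \<mu><..t}|\<nu>. \<phi> v) * h t \<le> \<phi> t * (barG (t * \<mu>) - barG t) * h t"
        using Pc_bounds[OF le_tm[OF that]] h_pos[of t] by (intro mult_right_mono) auto
      also have "\<dots> = upt t" unfolding upt_def
        using phi_h[of t] barG_pos[of t] by (simp add: field_simps)
      finally show ?thesis using rec_eq[OF that] by simp
    qed
    have rec_lo: "D t \<ge> qt t * D (t * \<mu>) + lot t" if "t > 0" for t
    proof -
      have "\<phi> (t * \<mu>) * (barG (t * \<mu>) - barG t) * h t \<le> (LINT v:{t * \<mu><..t}|\<nu>. \<phi> v) * h t"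
        using Pc_bounds[OF le_tm[OF that]] h_pos[of t] by (intro mult_right_mono) auto
      moreover have "\<phi> (t * \<mu>) * (barG (t * \<mu>) - barG t) * h t = lot t"
      proof -
        have "\<phi> (t * \<mu>) = 1 / (barG (t * \<mu>) * h (t * \<mu>))"
          unfolding \<phi>_def h_def ..
        then show ?thesis unfolding lot_def qt_def
          using barG_pos[of "t * \<mu>"] h_pos[of "t * \<mu>"] by (simp add: field_simps)
      qed
      ultimately show ?thesis using rec_eq[OF that] by simp
    qed
    have ev_pos: "eventually (\<lambda>t. t > (0::real)) at_top" by (rule eventually_gt_at_top)
    show ?thesis
    proof
      show "eventually (\<lambda>t. D t < (\<mu> powr (- a) - 1) / (1 - \<mu> powr c) + \<epsilon>) at_top"
      proof (rule sandwich_upper[OF mu _ _ q_lim _ _ up_lim _ eps])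
        show "\<And>t. 0 < t \<Longrightarrow> 0 \<le> D t" using D_nn by auto
        show "\<exists>B. \<forall>s. T * \<mu> \<le> s \<and> s \<le> T \<longrightarrow> D s \<le> B" for T
          using D_le phi_mono by (intro exI[of _ "\<phi> T"]) (auto intro: order_trans)
        show "0 \<le> \<mu> powr c" "\<mu> powr c < 1" using q01 by auto
        show "\<forall>\<^sub>F t in at_top. D t \<le> qt t * D (t * \<mu>) + upt t"
          using ev_pos by eventually_elim (rule rec_up)
      qed
      show "eventually (\<lambda>t. D t > (1 - \<mu> powr a) * \<mu> powr c / (1 - \<mu> powr c) - \<epsilon>) at_top"
      proof (rule sandwich_lower[OF mu _ q_lim q01 lo_lim _ eps])
        show "\<And>t. 0 < t \<Longrightarrow> 0 \<le> D t" using D_nn by auto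
        show "\<forall>\<^sub>F t in at_top. qt t * D (t * \<mu>) + lot t \<le> D t"
          using ev_pos by eventually_elim (rule rec_lo)
      qed
    qed
  qed
  define L where "L = a * inverse c"
  have L_pos: "L > 0" unfolding L_def using a_pos c_pos by simp
  have D_lim: "(D \<longlongrightarrow> L) at_top"
  proof (rule order_tendstoI)
    fix y assume y: "y > L"
    have "eventually (\<lambda>m. (m powr (-a) - 1)/(1 - m powr c) < y \<and> (0 < m \<and> m < 1)) (at_left (1::real))" (is "eventually ?P _")
      using order_tendstoD(2)[OF mu_lim_up[OF a_pos c_pos] y[unfolded L_def]] ev_mu01
      by (rule eventually_conj)
    then obtain \<mu> where mu: "(\<mu> powr (-a) - 1)/(1 - \<mu> powr c) < y" "0 < \<mu>" "\<mu> < 1"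
    proof -
      have "at_left (1::real) = bot \<or> (\<exists>m. ?P m)" by (rule eventually_happens) fact
      then show ?thesis using that trivial_limit_at_left_real[of 1] by auto
    qed
    have "eventually (\<lambda>t. D t < (\<mu> powr (- a) - 1) / (1 - \<mu> powr c) + (y - (\<mu> powr (-a) - 1)/(1 - \<mu> powr c))) at_top"
      using bounds[OF mu(2,3), of "y - (\<mu> powr (-a) - 1)/(1 - \<mu> powr c)"] mu(1) by simp
    then show "eventually (\<lambda>t. D t < y) at_top" by simp
  next
    fix y assume y: "y < L"
    have "eventually (\<lambda>m. (1 - m powr a) * m powr c/(1 - m powr c) > y \<and> (0 < m \<and> m < 1)) (at_left (1::real))" (is "eventually ?P _")
      using order_tendstoD(1)[OF mu_lim_lo[OF a_pos c_pos] y[unfolded L_def]] ev_mu01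
      by (rule eventually_conj)
    then obtain \<mu> where mu: "(1 - \<mu> powr a) * \<mu> powr c/(1 - \<mu> powr c) > y" "0 < \<mu>" "\<mu> < 1"
    proof -
      have "at_left (1::real) = bot \<or> (\<exists>m. ?P m)" by (rule eventually_happens) fact
      then show ?thesis using that trivial_limit_at_left_real[of 1] by auto
    qed
    have "eventually (\<lambda>t. D t > (1 - \<mu> powr a) * \<mu> powr c / (1 - \<mu> powr c) - ((1 - \<mu> powr a) * \<mu> powr c/(1 - \<mu> powr c) - y)) at_top"
      using bounds[OF mu(2,3), of "(1 - \<mu> powr a) * \<mu> powr c/(1 - \<mu> powr c) - y"] mu(1) by simp
    then show "eventually (\<lambda>t. D t > y) at_top" by simp
  qed
  have L_eq: "L = (gam / gam_C) / \<delta>" unfolding L_def a_def c_def by (simp add: field_simps)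
  have C_eq: "C_\<delta> t = D t / h t" for t unfolding D_def using h_pos[of t] by simp
  have rvC: "regularly_varying C_\<delta> (\<delta> / gam)"
    unfolding regularly_varying_def
  proof (intro allI impI)
    fix x :: real assume x: "x > 0"
    have Dx: "((\<lambda>t. D (t * x)) \<longlongrightarrow> L) at_top"
      by (rule filterlim_compose[OF D_lim filterlim_times_const_at_top[OF x]])
    have "((\<lambda>t. (D (t * x) / D t) * (h t / h (t * x))) \<longlongrightarrow> (L / L) * x powr (\<delta> / gam)) at_top"
      using L_pos by (intro tendsto_intros Dx D_lim h_ratio_lim x) auto
    moreover have "(D (t * x) / D t) * (h t / h (t * x)) = C_\<delta> (t * x) / C_\<delta> t" for t
      unfolding C_eq using h_pos[of t] h_pos[of "t * x"] by (simp add: field_simps)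
    ultimately show "((\<lambda>t. C_\<delta> (t * x) / C_\<delta> t) \<longlongrightarrow> x powr (\<delta> / gam)) at_top"
      using L_pos by simp
  qed
  have asy: "C_\<delta> \<sim>[at_top] (\<lambda>t. (gam / gam_C) / (\<delta> * barH t powr \<delta>))"
  proof (rule asymp_equivI')
    have "((\<lambda>t. D t / L) \<longlongrightarrow> L / L) at_top" using L_pos by (intro tendsto_intros D_lim) auto
    moreover have "D t / L = C_\<delta> t / ((gam / gam_C) / (\<delta> * barH t powr \<delta>))" for t
      unfolding D_def L_eq h_def using gam_pos gC dpos hd_pos[of t] by (simp add: field_simps)
    ultimately show "((\<lambda>t. C_\<delta> t / ((gam / gam_C) / (\<delta> * barH t powr \<delta>))) \<longlongrightarrow> 1) at_top"
      using L_pos by simp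
  qed
  show ?thesis using rvC asy by simp
qed

end
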